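(* For integers $0\le\ell\le n$, let $K_{n,\ell}$ be the number of fixed points of a uniformly random $\ell$-matching on $\{1,\dots,n\}$. If $n\to\infty$ and $\ell=\ell(n)$ satisfies $\ell/n\to\theta\in[0,1]$, then $K_{n,\ell}$ converges in distribution to a Poisson$(\theta)$ random variable; that is, for every fixed integer $k\ge0$, $$\mathbb P(K_{n,\ell}=k)\longrightarrow e^{-\theta}\frac{\theta^k}{k!}.$$
   Context: An $\ell$-matching on $\{1,\dots,n\}$ is an injection $\sigma:I\hookrightarrow\{1,\dots,n\}$ where $I\subseteq\{1,\dots,n\}$ with $|I|=\ell$; the uniform distribution is over all such pairs $(I,\sigma)$. A fixed point of $\sigma$ is an $i\in I$ with $\sigma(i)=i$. Poisson$(0)$ denotes the point mass at $0$. *)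

theory Defs
  imports "HOL-Analysis.Analysis" "HOL-Library.FuncSet"
begin

text \<open>An l-matching on {1..n}: a pair (I, sigma) with I a subset of {1..n} of size l
  and sigma an injection from I into {1..n}; sigma is represented as an extensional
  function (undefined outside I), so distinct pairs are distinct matchings.\<close>
definition matchings :: "nat \<Rightarrow> nat \<Rightarrow> (nat set \<times> (nat \<Rightarrow> nat)) set" where
  "matchings n l = {(I, \<sigma>). I \<subseteq> {1..n} \<and> card I = l \<and>
      \<sigma> \<in> I \<rightarrow>\<^sub>E {1..n} \<and> inj_on \<sigma> I}"

definition fixed_points :: "nat set \<times> (nat \<Rightarrow> nat) \<Rightarrow> nat" where
  "fixed_points m = card {i \<in> fst m. snd m i = i}"

definition prob_fixed :: "nat \<Rightarrow> nat \<Rightarrow> nat \<Rightarrow> real" where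
  "prob_fixed n l k =
     real (card {m \<in> matchings n l. fixed_points m = k}) / real (card (matchings n l))"

end

theory Submission imports Defs begin

lemma inj_count:
  assumes "finite S" "finite T"
  shows "real (card {f \<in> S \<rightarrow>\<^sub>E T. inj_on f S}) = (\<Prod>i<card S. real (card T) - real i)"
  using assms
proof (induction S arbitrary: T rule: finite_induct)
  case empty
  then show ?case by (simp add: PiE_empty_domain Collect_conv_if)
next
  case (insert x S)
  define Y where "Y = {(y, g). y \<in> T \<and> g \<in> S \<rightarrow>\<^sub>E (T - {y}) \<and> inj_on g S}"
  define H where "H = (\<lambda>y. {g \<in> S \<rightarrow>\<^sub>E (T - {y}). inj_on g S})"
  define X where "X = {f \<in> insert x S \<rightarrow>\<^sub>E T. inj_on f (insert x S)}"
  have e1: "X = (\<lambda>(y, g). g(x:=y)) ` Y"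
    unfolding X_def Y_def by (rule extensional_funcset_extend_domain_inj_on_eq[OF insert(2)])
  have e2: "card ((\<lambda>(y, g). g(x:=y)) ` Y) = card Y"
    unfolding Y_def by (rule card_image[OF extensional_funcset_extend_domain_inj_onI[OF insert(2)]])
  have e3: "Y = Sigma T H" unfolding Y_def H_def by auto
  have fH: "finite (H y)" if "y \<in> T" for y
  proof -
    have "finite (S \<rightarrow>\<^sub>E (T - {y}))" using insert(1,4) by (intro finite_PiE) auto
    then show "finite (H y)" unfolding H_def by (rule finite_subset[rotated]) auto
  qed
  have e4: "card (Sigma T H) = (\<Sum>y\<in>T. card (H y))"
    by (rule card_SigmaI) (use insert(4) fH in auto)
  have cX: "card X = (\<Sum>y\<in>T. card (H y))"
    using e1 e2 e3 e4 by simp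
  have e5: "real (card (H y)) = (\<Prod>i<card S. real (card T) - real (Suc i))" if "y \<in> T" for y
  proof -
    have "T \<noteq> {}" using that by blast
    then have "card T > 0" using insert(4) by (simp add: card_gt_0_iff)
    then have "card T \<ge> 1" by simp
    then have cd: "real (card (T - {y})) = real (card T) - 1"
      using insert(4) that by (simp add: card_Diff_singleton of_nat_diff)
    have ih: "real (card (H y)) = (\<Prod>i<card S. real (card (T - {y})) - real i)"
      unfolding H_def by (rule insert.IH) (use insert(4) in simp)
    show ?thesis unfolding ih cd by (intro prod.cong refl) simp
  qed
  have "real (card X) = (\<Sum>y\<in>T. real (card (H y)))"
    unfolding cX by (rule of_nat_sum)
  then have "real (card X) = (\<Sum>y\<in>T. (\<Prod>i<card S. real (card T) - real (Suc i)))"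
    using e5 by simp
  then have "real (card X) = real (card T) * (\<Prod>i<card S. real (card T) - real (Suc i))"
    by simp
  then have "real (card X) = (\<Prod>i<Suc (card S). real (card T) - real i)"
    unfolding prod.lessThan_Suc_shift by simp
  then show ?case unfolding X_def using insert(1,2) by simp
qed

definition G :: "nat set \<Rightarrow> nat set \<Rightarrow> nat \<Rightarrow> (nat set \<times> (nat \<Rightarrow> nat)) set" where
  "G A B l = {(I, \<sigma>). I \<subseteq> A \<and> card I = l \<and> \<sigma> \<in> I \<rightarrow>\<^sub>E B \<and> inj_on \<sigma> I}"

lemma G_Sigma: "G A B l = Sigma {I. I \<subseteq> A \<and> card I = l} (\<lambda>I. {\<sigma> \<in> I \<rightarrow>\<^sub>E B. inj_on \<sigma> I})"
  by (auto simp: G_def)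

lemma finite_G: assumes "finite A" "finite B" shows "finite (G A B l)"
  unfolding G_Sigma
proof (rule finite_SigmaI)
  show "finite {I. I \<subseteq> A \<and> card I = l}" using assms(1) by auto
  fix I assume "I \<in> {I. I \<subseteq> A \<and> card I = l}"
  then have "I \<subseteq> A" by simp
  then have "finite I" using assms(1) by (rule finite_subset)
  then have "finite (I \<rightarrow>\<^sub>E B)" using assms(2) by (intro finite_PiE)
  then show "finite {\<sigma> \<in> I \<rightarrow>\<^sub>E B. inj_on \<sigma> I}" by (rule finite_subset[rotated]) auto
qed

lemma G_count:
  assumes "finite A" "finite B"
  shows "real (card (G A B l)) = real (card A choose l) * (\<Prod>i<l. real (card B) - real i)"
proof -
  have "card (G A B l) = (\<Sum>I\<in>{I. I \<subseteq> A \<and> card I = l}. card {\<sigma> \<in> I \<rightarrow>\<^sub>E B. inj_on \<sigma> I})"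
    unfolding G_Sigma
  proof (rule card_SigmaI)
    show "finite {I. I \<subseteq> A \<and> card I = l}" using assms(1) by auto
    show "\<forall>I\<in>{I. I \<subseteq> A \<and> card I = l}. finite {\<sigma> \<in> I \<rightarrow>\<^sub>E B. inj_on \<sigma> I}"
    proof
      fix I assume "I \<in> {I. I \<subseteq> A \<and> card I = l}"
      then have "I \<subseteq> A" by simp
  then have "finite I" using assms(1) by (rule finite_subset)
  then have "finite (I \<rightarrow>\<^sub>E B)" using assms(2) by (intro finite_PiE)
      then show "finite {\<sigma> \<in> I \<rightarrow>\<^sub>E B. inj_on \<sigma> I}" by (rule finite_subset[rotated]) auto
    qed
  qed
  then have "real (card (G A B l)) = (\<Sum>I\<in>{I. I \<subseteq> A \<and> card I = l}. real (card {\<sigma> \<in> I \<rightarrow>\<^sub>E B. inj_on \<sigma> I}))"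
    by simp
  also have "\<dots> = (\<Sum>I\<in>{I. I \<subseteq> A \<and> card I = l}. (\<Prod>i<l. real (card B) - real i))"
  proof (rule sum.cong[OF refl])
    fix I assume "I \<in> {I. I \<subseteq> A \<and> card I = l}"
    then have "I \<subseteq> A" "card I = l" by simp_all
    then have "finite I" "card I = l" using assms(1) by (auto intro: rev_finite_subset)
    then show "real (card {\<sigma> \<in> I \<rightarrow>\<^sub>E B. inj_on \<sigma> I}) = (\<Prod>i<l. real (card B) - real i)"
      using inj_count[of I B] assms(2) by simp
  qed
  also have "\<dots> = real (card A choose l) * (\<Prod>i<l. real (card B) - real i)"
    using n_subsets[OF assms(1), of l] by simp
  finally show ?thesis .
qed

lemma matchings_G: "matchings n l = G {1..n} {1..n} l"
  by (simp add: matchings_def G_def)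

definition fixs :: "nat set \<times> (nat \<Rightarrow> nat) \<Rightarrow> nat set" where
  "fixs m = {i \<in> fst m. snd m i = i}"

lemma fixed_card:
  assumes "finite A" "F \<subseteq> A" "card F = r" "r \<le> l"
  shows "card {m \<in> G A A l. F \<subseteq> fixs m} = card (G (A - F) (A - F) (l - r))"
proof -
  define f where "f = (\<lambda>(I::nat set, \<sigma>::nat\<Rightarrow>nat). (I - F, restrict \<sigma> (I - F)))"
  define h where "h = (\<lambda>(J::nat set) (\<tau>::nat\<Rightarrow>nat) (i::nat). if i \<in> J then \<tau> i else if i \<in> F then i else undefined)"
  define g where "g = (\<lambda>(J::nat set, \<tau>::nat\<Rightarrow>nat). (J \<union> F, h J \<tau>))"
  have fF: "finite F" using assms(2,1) by (rule finite_subset)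
  have "bij_betw f {m \<in> G A A l. F \<subseteq> fixs m} (G (A - F) (A - F) (l - r))"
  proof (rule bij_betw_byWitness[where f'=g])
    show "\<forall>a\<in>{m \<in> G A A l. F \<subseteq> fixs m}. g (f a) = a"
    proof
      fix a assume a: "a \<in> {m \<in> G A A l. F \<subseteq> fixs m}"
      obtain I \<sigma> where aI: "a = (I, \<sigma>)" by fastforce
      from a have FI: "F \<subseteq> I" and fx: "\<forall>i\<in>F. \<sigma> i = i" and sp: "\<sigma> \<in> I \<rightarrow>\<^sub>E A"
        unfolding aI by (auto simp: G_def fixs_def)
      have ext: "\<sigma> i = undefined" if "i \<notin> I" for i
        using sp that by (simp add: PiE_def extensional_def)
      have e1: "I - F \<union> F = I" using FI by blast
      have e2: "h (I - F) (restrict \<sigma> (I - F)) = \<sigma>"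
      proof
        fix i
        show "h (I - F) (restrict \<sigma> (I - F)) i = \<sigma> i"
        proof (cases "i \<in> I - F")
          case True then show ?thesis by (simp add: h_def)
        next
          case False
          show ?thesis
          proof (cases "i \<in> F")
            case True then show ?thesis using False fx by (simp add: h_def)
          next
            case False2: False
            then have "i \<notin> I" using False by blast
            then show ?thesis using False False2 ext by (simp add: h_def)
          qed
        qed
      qed
      show "g (f a) = a" unfolding aI f_def g_def using e1 e2 by simp
    qed
    show "\<forall>a\<in>G (A - F) (A - F) (l - r). f (g a) = a"
    proof
      fix a assume a: "a \<in> G (A - F) (A - F) (l - r)"
      obtain J \<tau> where aJ: "a = (J, \<tau>)" by fastforce
      from a have JA: "J \<subseteq> A - F" and tp: "\<tau> \<in> J \<rightarrow>\<^sub>E (A - F)" unfolding aJ by (auto simp: G_def)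
      have ext: "\<tau> i = undefined" if "i \<notin> J" for i
        using tp that by (simp add: PiE_def extensional_def)
      have e1: "J \<union> F - F = J" using JA by blast
      have e2: "restrict (h J \<tau>) J = \<tau>"
      proof
        fix i show "restrict (h J \<tau>) J i = \<tau> i"
          by (cases "i \<in> J") (simp_all add: h_def ext)
      qed
      show "f (g a) = a" unfolding aJ f_def g_def using e1 e2 by simp
    qed
    show "f ` {m \<in> G A A l. F \<subseteq> fixs m} \<subseteq> G (A - F) (A - F) (l - r)"
    proof
      fix b assume "b \<in> f ` {m \<in> G A A l. F \<subseteq> fixs m}"
      then obtain I \<sigma> where b: "b = f (I, \<sigma>)" and m: "(I, \<sigma>) \<in> G A A l" "F \<subseteq> fixs (I, \<sigma>)" by auto
      from m have I: "I \<subseteq> A" "card I = l" "\<sigma> \<in> I \<rightarrow>\<^sub>E A" "inj_on \<sigma> I" "F \<subseteq> I" "\<forall>i\<in>F. \<sigma> i = i"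
        by (auto simp: G_def fixs_def)
      have fI: "finite I" using I(1) assms(1) by (rule finite_subset)
      have c: "card (I - F) = l - r" using I fF assms(3) by (simp add: card_Diff_subset)
      have im: "\<sigma> i \<in> A - F" if "i \<in> I - F" for i
      proof -
        have "\<sigma> i \<in> A" using I(3) that by auto
        moreover have "\<sigma> i \<notin> F"
        proof
          assume "\<sigma> i \<in> F"
          then have "\<sigma> (\<sigma> i) = \<sigma> i" using I(6) by auto
          then have "\<sigma> i = i" using I(4) I(5) \<open>\<sigma> i \<in> F\<close> that by (meson inj_onD subsetD DiffD1)
          then show False using \<open>\<sigma> i \<in> F\<close> that by auto
        qed
        ultimately show ?thesis by auto
      qed
      have pi: "restrict \<sigma> (I - F) \<in> (I - F) \<rightarrow>\<^sub>E (A - F)"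
        using im by (simp add: PiE_iff)
      have inj: "inj_on (restrict \<sigma> (I - F)) (I - F)"
        using I(4) by (simp add: inj_on_def)
      have sub: "I - F \<subseteq> A - F" using I(1) by blast
      show "b \<in> G (A - F) (A - F) (l - r)"
        unfolding b f_def G_def using c pi inj sub by simp
    qed
    show "g ` G (A - F) (A - F) (l - r) \<subseteq> {m \<in> G A A l. F \<subseteq> fixs m}"
    proof
      fix b assume "b \<in> g ` G (A - F) (A - F) (l - r)"
      then obtain J \<tau> where b: "b = g (J, \<tau>)" and m: "(J, \<tau>) \<in> G (A - F) (A - F) (l - r)" by auto
      from m have J: "J \<subseteq> A - F" "card J = l - r" "\<tau> \<in> J \<rightarrow>\<^sub>E (A - F)" "inj_on \<tau> J"
        by (auto simp: G_def)
      have fJ: "finite J" using J(1) assms(1) by (meson Diff_subset finite_subset subset_trans)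
      have c: "card (J \<union> F) = l"
      proof -
        have "J \<inter> F = {}" using J(1) by blast
        then have "card (J \<union> F) = card J + card F" using fJ fF by (rule card_Un_disjoint[rotated 2])
        then show ?thesis using J(2) assms(3,4) by simp
      qed
      have tv: "\<tau> i \<in> A - F" if "i \<in> J" for i using J(3) that by auto
      have ext: "\<tau> i = undefined" if "i \<notin> J" for i
        using J(3) that by (simp add: PiE_def extensional_def)
      have pi: "h J \<tau> \<in> (J \<union> F) \<rightarrow>\<^sub>E A"
      proof (rule PiE_I)
        fix i assume "i \<in> J \<union> F"
        then show "h J \<tau> i \<in> A" using tv assms(2) by (auto simp: h_def)
      next
        fix i assume "i \<notin> J \<union> F"
        then show "h J \<tau> i = undefined" by (simp add: h_def)
      qed
      have inj: "inj_on (h J \<tau>) (J \<union> F)"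
      proof (rule inj_onI)
        fix x y assume x: "x \<in> J \<union> F" and y: "y \<in> J \<union> F" and e: "h J \<tau> x = h J \<tau> y"
        show "x = y"
        proof (cases "x \<in> J")
          case True
          show ?thesis
          proof (cases "y \<in> J")
            case True
            then show ?thesis using \<open>x \<in> J\<close> e J(4) by (simp add: h_def inj_on_def)
          next
            case False
            then have "y \<in> F" using y by blast
            then have "\<tau> x = y" using e \<open>x \<in> J\<close> False by (simp add: h_def)
            then show ?thesis using tv[OF \<open>x \<in> J\<close>] \<open>y \<in> F\<close> by blast
          qed
        next
          case False
          then have "x \<in> F" using x by blast
          show ?thesis
          proof (cases "y \<in> J")
            case True
            then have "\<tau> y = x" using e \<open>x \<notin> J\<close> \<open>x \<in> F\<close> by (simp add: h_def)
            then show ?thesis using tv[OF True] \<open>x \<in> F\<close> by blast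
          next
            case False2: False
            then have "y \<in> F" using y by blast
            then show ?thesis using e False False2 \<open>x \<in> F\<close> by (simp add: h_def)
          qed
        qed
      qed
      have sub: "J \<union> F \<subseteq> A" using J(1) assms(2) by blast
      have fx: "F \<subseteq> fixs (J \<union> F, h J \<tau>)"
      proof
        fix i assume "i \<in> F"
        then have "i \<notin> J" using J(1) by blast
        then show "i \<in> fixs (J \<union> F, h J \<tau>)" using \<open>i \<in> F\<close> by (simp add: fixs_def h_def)
      qed
      have "(J \<union> F, h J \<tau>) \<in> G A A l" unfolding G_def using c pi inj sub by simp
      then show "b \<in> {m \<in> G A A l. F \<subseteq> fixs m}" unfolding b g_def using fx by simp
    qed
  qed
  then show ?thesis by (rule bij_betw_same_card)
qed

lemma indicator_sum_card:
  assumes "finite X"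
  shows "(\<Sum>x\<in>X. (if P x then 1 else 0 :: real)) = real (card {x \<in> X. P x})"
  using sum.inter_filter[OF assms, of "\<lambda>_. (1::real)" P] by simp

lemma S_formula:
  assumes A: "finite A"
  shows "(\<Sum>m\<in>G A A l. real (card (fixs m) choose r)) =
     real (card A choose r) * (if r \<le> l then real ((card A - r) choose (l - r)) *
        (\<Prod>i<l - r. real (card A - r) - real i) else 0)"
proof -
  define P where "P = {F. F \<subseteq> A \<and> card F = r}"
  have fP: "finite P" using A by (simp add: P_def)
  have fG: "finite (G A A l)" using finite_G[OF A A] .
  have fixsA: "fixs m \<subseteq> A" if "m \<in> G A A l" for m
    using that by (auto simp: G_def fixs_def)
  have "(\<Sum>m\<in>G A A l. real (card (fixs m) choose r)) =
      (\<Sum>m\<in>G A A l. \<Sum>F\<in>P. (if F \<subseteq> fixs m then 1 else 0 :: real))"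
  proof (rule sum.cong[OF refl])
    fix m assume m: "m \<in> G A A l"
    have ff: "finite (fixs m)" using fixsA[OF m] A by (rule finite_subset)
    have "{F. F \<subseteq> fixs m \<and> card F = r} = {F \<in> P. F \<subseteq> fixs m}"
      using fixsA[OF m] by (auto simp: P_def)
    then show "real (card (fixs m) choose r) = (\<Sum>F\<in>P. (if F \<subseteq> fixs m then 1 else 0 :: real))"
      using n_subsets[OF ff, of r] indicator_sum_card[OF fP, of "\<lambda>F. F \<subseteq> fixs m"] by simp
  qed
  also have "\<dots> = (\<Sum>F\<in>P. \<Sum>m\<in>G A A l. (if F \<subseteq> fixs m then 1 else 0 :: real))"
    by (rule sum.swap)
  also have "\<dots> = (\<Sum>F\<in>P. real (card {m \<in> G A A l. F \<subseteq> fixs m}))"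
    by (rule sum.cong[OF refl]) (rule indicator_sum_card[OF fG])
  also have "\<dots> = (\<Sum>F\<in>P. (if r \<le> l then real ((card A - r) choose (l - r)) *
        (\<Prod>i<l - r. real (card A - r) - real i) else 0))"
  proof (rule sum.cong[OF refl])
    fix F assume F: "F \<in> P"
    then have FA: "F \<subseteq> A" "card F = r" by (auto simp: P_def)
    show "real (card {m \<in> G A A l. F \<subseteq> fixs m}) = (if r \<le> l then real ((card A - r) choose (l - r)) *
        (\<Prod>i<l - r. real (card A - r) - real i) else 0)"
    proof (cases "r \<le> l")
      case True
      have cd: "card (A - F) = card A - r" using FA A finite_subset[OF FA(1) A] by (simp add: card_Diff_subset)
      show ?thesis using True fixed_card[OF A FA True] G_count[of "A - F" "A - F" "l - r"] A cd by simp
    next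
      case False
      have "{m \<in> G A A l. F \<subseteq> fixs m} = {}"
      proof (rule ccontr)
        assume "{m \<in> G A A l. F \<subseteq> fixs m} \<noteq> {}"
        then obtain m where m: "m \<in> G A A l" "F \<subseteq> fixs m" by auto
        then have "F \<subseteq> fst m" "fst m \<subseteq> A" "card (fst m) = l" by (auto simp: fixs_def G_def)
        then have "card F \<le> l" using A by (metis card_mono finite_subset)
        then show False using False FA by simp
      qed
      then show ?thesis using False by (simp only:) simp
    qed
  qed
  also have "\<dots> = real (card A choose r) * (if r \<le> l then real ((card A - r) choose (l - r)) *
        (\<Prod>i<l - r. real (card A - r) - real i) else 0)"
    using n_subsets[OF A, of r] by (simp add: P_def)
  finally show ?thesis .
qed

lemma binom_real: "real (l choose r) = (\<Prod>i<r. real l - real i) / fact r"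
  by (simp add: binomial_gbinomial gbinomial_prod_rev atLeast0LessThan)

lemma prod_split: "(\<Prod>i<a+b. x - real i) = (\<Prod>i<a. x - real i) * (\<Prod>i<b. (x - real a) - real i)"
  by (induction b) (simp_all add: algebra_simps)

lemma prod_pos_ff: "r \<le> n \<Longrightarrow> (\<Prod>i<r. real n - real i) > 0"
  by (rule prod_pos) auto

lemma ratio:
  assumes "l \<le> n"
  shows "(\<Sum>m\<in>matchings n l. real (fixed_points m choose r)) / real (card (matchings n l))
     = (\<Prod>i<r. (real l - real i) / (real n - real i)) / fact r"
proof -
  have fp: "fixed_points = (\<lambda>m. card (fixs m))" by (simp add: fun_eq_iff fixed_points_def fixs_def)
  have S: "(\<Sum>m\<in>matchings n l. real (fixed_points m choose r)) =
     real (n choose r) * (if r \<le> l then real ((n - r) choose (l - r)) *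
        (\<Prod>i<l - r. real (n - r) - real i) else 0)"
    unfolding fp matchings_G using S_formula[where A="{1..n}" and l=l and r=r] by simp
  have M: "real (card (matchings n l)) = real (n choose l) * (\<Prod>i<l. real n - real i)"
    unfolding matchings_G using G_count[of "{1..n}" "{1..n}" l] by simp
  show ?thesis
  proof (cases "r \<le> l")
    case True
    have cm: "real (n choose r) * real ((n - r) choose (l - r)) = real (n choose l) * real (l choose r)"
      using choose_mult[OF True assms] by (metis of_nat_mult)
    have sp: "(\<Prod>i<l. real n - real i) = (\<Prod>i<r. real n - real i) * (\<Prod>i<l - r. real (n - r) - real i)"
      using prod_split[where a=r and b="l - r" and x="real n"] True assms by (simp add: of_nat_diff)
    have p1: "(\<Prod>i<r. real n - real i) > 0" by (rule prod_pos_ff) (use True assms in simp)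
    have p2: "(\<Prod>i<l - r. real (n - r) - real i) > 0" by (rule prod_pos_ff) (use True assms in simp)
    have c0: "real (n choose l) > 0" using assms by simp
    define X where "X = (\<Prod>i<l - r. real (n - r) - real i)"
    define P1 where "P1 = (\<Prod>i<r. real n - real i)"
    have "(\<Sum>m\<in>matchings n l. real (fixed_points m choose r)) / real (card (matchings n l))
        = (real (n choose r) * (real ((n - r) choose (l - r)) * X)) / (real (n choose l) * (P1 * X))"
      unfolding S M sp X_def P1_def using True by simp
    also have "\<dots> = (real (n choose l) * real (l choose r)) * X / (real (n choose l) * P1 * X)"
      by (simp only: cm[symmetric] mult.assoc)
    also have "\<dots> = real (l choose r) / (\<Prod>i<r. real n - real i)"
      using p1 p2 c0 unfolding X_def[symmetric] P1_def[symmetric] by (simp add: field_simps)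
    also have "\<dots> = (\<Prod>i<r. (real l - real i) / (real n - real i)) / fact r"
      by (simp add: binom_real prod_dividef field_simps)
    finally show ?thesis .
  next
    case False
    have "(\<Prod>i<r. (real l - real i) / (real n - real i)) = 0"
      using False by (intro prod_zero) (auto intro!: bexI[of _ l])
    then show ?thesis using False unfolding S by simp
  qed
qed

lemma alt_sum: "(\<Sum>s\<le>d. (-1)^s * real (d choose s)) = (if d = 0 then 1 else 0)"
  using choose_alternating_sum[of d, where 'a=real] by auto

lemma inversion:
  assumes "f \<le> n"
  shows "(\<Sum>r\<le>n. (-1)^r * real (f choose r) * real (r choose k)) = (if f = k then (-1)^k else 0)"
proof -
  define g where "g r = (-1)^r * real (f choose r) * real (r choose k)" for r
  have "(\<Sum>r\<le>n. g r) = (\<Sum>r\<le>f. g r)"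
    by (rule sum.mono_neutral_right) (use assms in \<open>auto simp: g_def\<close>)
  also have "\<dots> = (if f = k then (-1)^k else 0)"
  proof (cases "k \<le> f")
    case False
    have "(\<Sum>r\<le>f. g r) = 0" using False by (intro sum.neutral) (auto simp: g_def)
    then show ?thesis using False by simp
  next
    case True
    have "(\<Sum>r\<le>f. g r) = (\<Sum>r\<in>{k..f}. g r)"
      by (rule sum.mono_neutral_right) (auto simp: g_def)
    also have "{k..f} = {0+k..(f-k)+k}" using True by simp
    also have "sum g \<dots> = (\<Sum>s\<in>{0..f-k}. g (s + k))"
      by (rule sum.shift_bounds_cl_nat_ivl)
    also have "\<dots> = (\<Sum>s\<le>f-k. (-1)^k * real (f choose k) * ((-1)^s * real ((f - k) choose s)))"
    proof (rule sum.cong)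
      show "{0..f-k} = {..f-k}" by auto
      fix s assume "s \<in> {..f-k}"
      then have "k \<le> s + k" "s + k \<le> f" using True by auto
      from choose_mult[OF this] have "real (f choose (s+k)) * real ((s+k) choose k) = real (f choose k) * real ((f - k) choose s)"
        by (metis of_nat_mult add_diff_cancel_right')
      then show "g (s + k) = (-1)^k * real (f choose k) * ((-1)^s * real ((f - k) choose s))"
        unfolding g_def by (simp add: power_add algebra_simps)
    qed
    also have "\<dots> = (-1)^k * real (f choose k) * (\<Sum>s\<le>f-k. (-1)^s * real ((f - k) choose s))"
      by (simp add: sum_distrib_left)
    also have "\<dots> = (if f = k then (-1)^k else 0)"
      using True by (simp add: alt_sum)
    finally show ?thesis .
  qed
  finally show ?thesis unfolding g_def .
qed

lemma prob_formula:
  assumes "l \<le> n"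
  shows "prob_fixed n l k = (\<Sum>r\<le>n. (-1)^k * (-1)^r * real (r choose k) *
      ((\<Prod>i<r. (real l - real i) / (real n - real i)) / fact r))"
proof -
  have fM: "finite (matchings n l)" unfolding matchings_G by (rule finite_G) auto
  have fpn: "fixed_points m \<le> n" if "m \<in> matchings n l" for m
  proof -
    have "{i \<in> fst m. snd m i = i} \<subseteq> {1..n}" using that by (auto simp: matchings_def)
    then show ?thesis unfolding fixed_points_def using card_mono[of "{1..n}"] by fastforce
  qed
  have "real (card {m \<in> matchings n l. fixed_points m = k}) =
      (\<Sum>m\<in>matchings n l. (if fixed_points m = k then 1 else 0 :: real))"
    using indicator_sum_card[OF fM] by simp
  also have "\<dots> = (\<Sum>m\<in>matchings n l. (-1)^k * (\<Sum>r\<le>n. (-1)^r * real (fixed_points m choose r) * real (r choose k)))"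
    by (rule sum.cong[OF refl]) (simp add: inversion[OF fpn])
  also have "\<dots> = (\<Sum>r\<le>n. (-1)^k * (-1)^r * real (r choose k) * (\<Sum>m\<in>matchings n l. real (fixed_points m choose r)))"
  proof -
    have "(\<Sum>m\<in>matchings n l. (-1)^k * (\<Sum>r\<le>n. (-1)^r * real (fixed_points m choose r) * real (r choose k)))
       = (\<Sum>m\<in>matchings n l. \<Sum>r\<le>n. (-1)^k * (-1)^r * real (r choose k) * real (fixed_points m choose r))"
      by (simp add: sum_distrib_left mult_ac)
    also have "\<dots> = (\<Sum>r\<le>n. \<Sum>m\<in>matchings n l. (-1)^k * (-1)^r * real (r choose k) * real (fixed_points m choose r))"
      by (rule sum.swap)
    also have "\<dots> = (\<Sum>r\<le>n. (-1)^k * (-1)^r * real (r choose k) * (\<Sum>m\<in>matchings n l. real (fixed_points m choose r)))"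
      by (simp only: sum_distrib_left)
    finally show ?thesis .
  qed
  finally have X: "real (card {m \<in> matchings n l. fixed_points m = k}) = (\<Sum>r\<le>n. (-1)^k * (-1)^r * real (r choose k) * (\<Sum>m\<in>matchings n l. real (fixed_points m choose r)))" .
  have "prob_fixed n l k = (\<Sum>r\<le>n. (-1)^k * (-1)^r * real (r choose k) * (\<Sum>m\<in>matchings n l. real (fixed_points m choose r))) / real (card (matchings n l))"
    unfolding prob_fixed_def X ..
  also have "\<dots> = (\<Sum>r\<le>n. (-1)^k * (-1)^r * real (r choose k) *
      ((\<Sum>m\<in>matchings n l. real (fixed_points m choose r)) / real (card (matchings n l))))"
    by (subst sum_divide_distrib) (simp only: times_divide_eq_right)
  also have "\<dots> = (\<Sum>r\<le>n. (-1)^k * (-1)^r * real (r choose k) *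
      ((\<Prod>i<r. (real l - real i) / (real n - real i)) / fact r))"
    by (simp only: ratio[OF assms])
  finally show ?thesis .
qed

lemma R_zero: "l < r \<Longrightarrow> (\<Prod>i<r. (real l - real i) / (real n - real i)) = 0"
  by (intro prod_zero) (auto intro!: bexI[of _ l])

lemma R_bound: "l \<le> n \<Longrightarrow> \<bar>\<Prod>i<r. (real l - real i) / (real n - real i)\<bar> \<le> 1"
proof (cases "l < r")
  case True
  then show ?thesis by (simp add: R_zero)
next
  case False
  assume ln: "l \<le> n"
  have "\<bar>\<Prod>i<r. (real l - real i) / (real n - real i)\<bar> = (\<Prod>i<r. \<bar>(real l - real i) / (real n - real i)\<bar>)"
    by (simp add: abs_prod)
  also have "\<dots> \<le> (\<Prod>i<r. 1)"
  proof (rule prod_mono)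
    fix i assume "i \<in> {..<r}"
    then have "i < l" "i < n" using False ln by auto
    then show "0 \<le> \<bar>(real l - real i) / (real n - real i)\<bar> \<and> \<bar>(real l - real i) / (real n - real i)\<bar> \<le> 1"
    proof -
      have p: "0 < real n - real i" using \<open>i < n\<close> by simp
      have h1: "0 \<le> (real l - real i) / (real n - real i)"
        using p \<open>i < l\<close> by (intro divide_nonneg_pos) auto
      have h2: "(real l - real i) / (real n - real i) \<le> 1"
        using p ln by (subst divide_le_eq_1_pos) auto
      show ?thesis using h1 h2 by linarith
    qed
  qed
  finally show ?thesis by simp
qed

lemma R_lim:
  assumes "(\<lambda>n. real (L n) / real n) \<longlonglongrightarrow> theta"
  shows "(\<lambda>n. \<Prod>i<r. (real (L n) - real i) / (real n - real i)) \<longlonglongrightarrow> theta ^ r"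
proof -
  have "(\<lambda>n. \<Prod>i<r. (real (L n) - real i) / (real n - real i)) \<longlonglongrightarrow> (\<Prod>i<r. theta)"
  proof (rule tendsto_prod)
    fix i :: nat
    have lim: "(\<lambda>n. (real (L n) / real n - real i * (1 / real n)) / (1 - real i * (1 / real n))) \<longlonglongrightarrow>
        (theta - real i * 0) / (1 - real i * 0)"
      by (intro tendsto_intros assms lim_inverse_n') simp
    have ev: "eventually (\<lambda>n. (real (L n) / real n - real i * (1 / real n)) / (1 - real i * (1 / real n))
        = (real (L n) - real i) / (real n - real i)) sequentially"
      using eventually_gt_at_top[of i]
    proof eventually_elim
      case (elim n)
      then have "real n > 0" "real n - real i \<noteq> 0" by auto
      then show ?case by (simp add: field_simps)
    qed
    have e: "(theta - real i * 0) / (1 - real i * 0) = theta" by simp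
    show "(\<lambda>n. (real (L n) - real i) / (real n - real i)) \<longlonglongrightarrow> theta"
      using Lim_transform_eventually[OF lim ev] unfolding e .
  qed
  then show ?thesis by (simp only: prod_constant card_lessThan)
qed

theorem mainTheorem9:
  fixes L :: "nat \<Rightarrow> nat" and theta :: real and k :: nat
  assumes "\<And>n. L n \<le> n"
    and "0 \<le> theta" and "theta \<le> 1"
    and "(\<lambda>n. real (L n) / real n) \<longlonglongrightarrow> theta"
  shows "(\<lambda>n. prob_fixed n (L n) k) \<longlonglongrightarrow> exp (- theta) * theta ^ k / fact k"
proof -
  define R where "R n r = (\<Prod>i<r. (real (L n) - real i) / (real n - real i))" for n r
  define a where "a r n = (-1)^k * (-1)^r * real (r choose k) * (R n r / fact r)" for r n
  define b where "b r = (-1)^k * (-1)^r * real (r choose k) * (theta ^ r / fact r)" for r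
  define M where "M r = real (r choose k) / fact r" for r :: nat
  have pf: "prob_fixed n (L n) k = suminf (\<lambda>r. a r n)" for n
  proof -
    have "prob_fixed n (L n) k = (\<Sum>r\<le>n. a r n)"
      unfolding a_def R_def by (rule prob_formula[OF assms(1)])
    also have "\<dots> = suminf (\<lambda>r. a r n)"
    proof (rule suminf_finite[symmetric])
      show "finite {..n}" by simp
      fix r assume "r \<notin> {..n}"
      then have "L n < r" using assms(1)[of n] by auto
      then show "a r n = 0" by (simp add: a_def R_def R_zero)
    qed
    finally show ?thesis .
  qed
  have summM: "summable M"
  proof (rule summable_comparison_test)
    show "summable (\<lambda>r. inverse (fact r) * (2::real) ^ r)" by (rule summable_exp)
    show "\<exists>N. \<forall>r\<ge>N. norm (M r) \<le> inverse (fact r) * 2 ^ r"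
    proof (intro exI allI impI)
      fix r :: nat
      have "real (r choose k) \<le> 2 ^ r" using binomial_le_pow2[of r k]
        by (metis of_nat_le_iff of_nat_numeral of_nat_power)
      then show "norm (M r) \<le> inverse (fact r) * 2 ^ r"
        by (simp add: M_def divide_simps)
    qed
  qed
  have T: "((\<lambda>n. suminf (\<lambda>r. a r n)) \<longlongrightarrow> suminf b) sequentially"
  proof (rule tannerys_theorem[THEN conjunct2, THEN conjunct2])
    fix r
    show "((\<lambda>n. a r n) \<longlongrightarrow> b r) sequentially"
      unfolding a_def b_def R_def by (intro tendsto_intros R_lim assms(4)) simp_all
    show "eventually (\<lambda>(r, n). norm (a r n) \<le> M r) (at_top \<times>\<^sub>F sequentially)"
    proof (rule always_eventually, clarify)
      fix r n
      have "\<bar>R n r\<bar> \<le> 1" unfolding R_def by (rule R_bound[OF assms(1)])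
      then have "\<bar>R n r\<bar> * real (r choose k) / fact r \<le> 1 * real (r choose k) / fact r"
        by (intro divide_right_mono mult_right_mono) auto
      then show "norm (a r n) \<le> M r"
        by (simp add: a_def M_def abs_mult mult.commute)
    qed
    show "summable M" by (rule summM)
    show "sequentially \<noteq> bot" by simp
  qed
  have bsum: "b sums (exp (- theta) * theta ^ k / fact k)"
  proof -
    have "(\<lambda>j. b (j + k)) = (\<lambda>j. theta ^ k / fact k * ((- theta) ^ j /\<^sub>R fact j))"
    proof
      fix j
      have "real ((j + k) choose k) = fact (j + k) / (fact k * fact j)"
        using binomial_fact[of k "j + k"] by simp
      then show "b (j + k) = theta ^ k / fact k * ((- theta) ^ j /\<^sub>R fact j)"
        unfolding b_def
        by (simp add: power_add power_minus' field_simps power_mult_distrib)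
    qed
    moreover have "(\<lambda>j. theta ^ k / fact k * ((- theta) ^ j /\<^sub>R fact j)) sums (theta ^ k / fact k * exp (- theta))"
      by (rule sums_mult[OF exp_converges])
    ultimately have "(\<lambda>j. b (j + k)) sums (exp (- theta) * theta ^ k / fact k)"
      by (simp add: mult.commute)
    then show ?thesis
      by (subst (asm) sums_zero_iff_shift) (auto simp: b_def)
  qed
  show ?thesis
    using T unfolding pf[symmetric] sums_unique[OF bsum, symmetric] .
qed

end
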